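(* Let $(G,R,\omega)$ be a metric RPP instance. Let $v$ be a vertex to which vertex extraction (as defined below) is applicable, and let $R'$ be a result of extracting $v$ from $G\langle R\rangle$. Then: (i) $V(R')=V(R)\setminus\{v\}$; (ii) $\omega(R')\le\omega(R)$ and $|R'|\le|R|$; (iii) each vertex of $G\langle R'\rangle$ is balanced in $G\langle R'\rangle$ if and only if it is balanced in $G\langle R\rangle$; (iv) two vertices of $G\langle R'\rangle$ are connected in $G\langle R'\rangle$ if and only if they are connected in $G\langle R\rangle$; (v) every multiset $S$ of edges with $V(S)\subseteq V(R')$ is an Eulerian extension for $(G,R',\omega)$ if and only if it is one for $(G,R,\omega)$.
   Context: An RPP instance is a triple $(G,R,\omega)$, where $G=(V,E)$ is an undirected multigraph, $\omega\colon E\to\mathbb{N}$ assigns weights (parallel edges have equal weight), and $R$ is a nonempty multiset of edges of $G$. The instance is metric if $G$ contains an edge between any two vertices and the weights satisfy the triangle inequality $\omega(\{u,w\})\le\omega(\{u,v\})+\omega(\{v,w\})$ for all $u,v,w\in V$. For a multiset $X$ of edges: - $\omega(X)$ and $|X|$ are weight and cardinality with multiplicity; - $V(X)$ is the set of vertices incident to edges of $X$; - $G\langle X\rangle=(V(X),X)$; - $\uplus$ and $\setminus$ denote multiset sum and difference. A vertex is balanced if its degree is even (a loop counts 2). A multigraph without isolated vertices is Eulerian if it is connected and all vertices are balanced. An Eulerian extension for $(G,R,\omega)$ is a multiset $S$ of edges with $G\langle R\uplus S\rangle$ Eulerian. A block is a maximal subgraph without cut vertices. Vertex extraction. Let $v$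 be a vertex that is balanced in $G\langle R\rangle$ and lies in a connected component of $G\langle R\rangle$ with at least three vertices. Suppose moreover that $v$ is either not a cut vertex of $G\langle R\rangle$, or a cut vertex contained in exactly two blocks of $G\langle R\rangle$. Let $R_v\subseteq R$ be the required edges incident to $v$. (a) If $v$ is not a cut vertex of $G\langle R\rangle$: let $M_v$ be any perfect matching (of edges of $G$) on the set of vertices other than $v$ that are incident to an odd number of edges of $R_v$. The result is $R'=(R\setminus R_v)\uplus M_v$. (b) If $v$ is a cut vertex contained in exactly two blocks $A$ and $B$: let $a\ne v$ be a neighbor of $v$ in $A$ and $b\ne v$ a neighbor of $v$ in $B$, and let $R''=(R\setminus\{\{a,v\},\{b,v\}\})\uplus\{\{a,b\}\}$. If $v\notin V(R'')$, the result is $R''$. Otherwise $v$ is not a cut vertex of $G\langle R''\rangle$, and the result is the result of extracting $v$ from $G\langle R''\rangle$ according to (a). *)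

theory Defs
  imports Main "HOL-Library.Multiset" "HOL-Library.Uprod"
begin

text \<open>Since parallel edges have equal weight, a multigraph edge is identified with the
unordered pair of its endpoints; a multiset of edges is a multiset of such pairs.\<close>

type_synonym 'v edge = "'v uprod"

definition verts :: "'v edge multiset \<Rightarrow> 'v set" where
  "verts X = (\<Union>e\<in>set_mset X. set_uprod e)"

definition deg :: "'v edge multiset \<Rightarrow> 'v \<Rightarrow> nat" where
  "deg X u = (\<Sum>e\<in>#X. (if e = Upair u u then 2 else if u \<in> set_uprod e then 1 else 0))"

definition balanced :: "'v edge multiset \<Rightarrow> 'v \<Rightarrow> bool" where
  "balanced X u \<longleftrightarrow> even (deg X u)"

definition reach :: "'v edge multiset \<Rightarrow> 'v \<Rightarrow> 'v \<Rightarrow> bool" where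
  "reach X u w \<longleftrightarrow> (u, w) \<in> {(a, b). Upair a b \<in># X}\<^sup>*"

text \<open>G<X> is Eulerian (it has no isolated vertices by construction)\<close>
definition eulerian :: "'v edge multiset \<Rightarrow> bool" where
  "eulerian X \<longleftrightarrow> (\<forall>u\<in>verts X. \<forall>w\<in>verts X. reach X u w) \<and> (\<forall>u\<in>verts X. balanced X u)"

definition eulerian_extension :: "'v edge set \<Rightarrow> 'v edge multiset \<Rightarrow> 'v edge multiset \<Rightarrow> bool" where
  "eulerian_extension E R S \<longleftrightarrow> set_mset S \<subseteq> E \<and> eulerian (R + S)"

definition rpp_instance :: "'v set \<Rightarrow> 'v edge set \<Rightarrow> ('v edge \<Rightarrow> nat) \<Rightarrow> 'v edge multiset \<Rightarrow> bool" where
  "rpp_instance V E \<omega> R \<longleftrightarrow> finite V \<and> (\<forall>e\<in>E. set_uprod e \<subseteq> V) \<and> R \<noteq> {#} \<and> set_mset R \<subseteq> E"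

definition metric_instance :: "'v set \<Rightarrow> 'v edge set \<Rightarrow> ('v edge \<Rightarrow> nat) \<Rightarrow> 'v edge multiset \<Rightarrow> bool" where
  "metric_instance V E \<omega> R \<longleftrightarrow> rpp_instance V E \<omega> R \<and>
     (\<forall>u\<in>V. \<forall>w\<in>V. u \<noteq> w \<longrightarrow> Upair u w \<in> E) \<and>
     (\<forall>u\<in>V. \<forall>v\<in>V. \<forall>w\<in>V. Upair u w \<in> E \<longrightarrow> Upair u v \<in> E \<longrightarrow> Upair v w \<in> E \<longrightarrow>
        \<omega> (Upair u w) \<le> \<omega> (Upair u v) + \<omega> (Upair v w))"

definition remove_vertex :: "'v \<Rightarrow> 'v edge multiset \<Rightarrow> 'v edge multiset" where
  "remove_vertex x X = filter_mset (\<lambda>e. x \<notin> set_uprod e) X"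

definition ncomp :: "'v set \<Rightarrow> 'v edge multiset \<Rightarrow> nat" where
  "ncomp VH EH = card (VH // {(a, b). a \<in> VH \<and> b \<in> VH \<and> reach EH a b})"

definition cut_vertex :: "'v set \<Rightarrow> 'v edge multiset \<Rightarrow> 'v \<Rightarrow> bool" where
  "cut_vertex VH EH x \<longleftrightarrow> x \<in> VH \<and> ncomp (VH - {x}) (remove_vertex x EH) > ncomp VH EH"

definition subgraph_of :: "'v edge multiset \<Rightarrow> 'v set \<Rightarrow> 'v edge multiset \<Rightarrow> bool" where
  "subgraph_of R VH EH \<longleftrightarrow> VH \<subseteq> verts R \<and> EH \<subseteq># R \<and> verts EH \<subseteq> VH"

definition connected_graph :: "'v set \<Rightarrow> 'v edge multiset \<Rightarrow> bool" where
  "connected_graph VH EH \<longleftrightarrow> VH \<noteq> {} \<and> (\<forall>a\<in>VH. \<forall>b\<in>VH. reach EH a b)"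

definition block_candidate :: "'v edge multiset \<Rightarrow> 'v set \<Rightarrow> 'v edge multiset \<Rightarrow> bool" where
  "block_candidate R VH EH \<longleftrightarrow> subgraph_of R VH EH \<and> connected_graph VH EH \<and>
      (\<forall>x. \<not> cut_vertex VH EH x)"

definition is_block :: "'v edge multiset \<Rightarrow> 'v set \<times> 'v edge multiset \<Rightarrow> bool" where
  "is_block R H \<longleftrightarrow> block_candidate R (fst H) (snd H) \<and>
     (\<forall>VH' EH'. block_candidate R VH' EH' \<and> fst H \<subseteq> VH' \<and> snd H \<subseteq># EH' \<longrightarrow>
        VH' = fst H \<and> EH' = snd H)"

definition incident :: "'v edge multiset \<Rightarrow> 'v \<Rightarrow> 'v edge multiset" where
  "incident R v = filter_mset (\<lambda>e. v \<in> set_uprod e) R"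

definition odd_nbrs :: "'v edge multiset \<Rightarrow> 'v \<Rightarrow> 'v set" where
  "odd_nbrs R v = {u. u \<noteq> v \<and> odd (size (filter_mset (\<lambda>e. u \<in> set_uprod e) (incident R v)))}"

definition perfect_matching :: "'v edge set \<Rightarrow> 'v set \<Rightarrow> 'v edge multiset \<Rightarrow> bool" where
  "perfect_matching E Ov M \<longleftrightarrow> set_mset M \<subseteq> E \<and>
     (\<forall>e\<in>#M. set_uprod e \<subseteq> Ov \<and> proper_uprod e) \<and>
     (\<forall>u\<in>Ov. size (filter_mset (\<lambda>e. u \<in> set_uprod e) M) = 1)"

definition extract_a :: "'v edge set \<Rightarrow> 'v edge multiset \<Rightarrow> 'v \<Rightarrow> 'v edge multiset \<Rightarrow> bool" where
  "extract_a E R v R' \<longleftrightarrow> (\<exists>M. perfect_matching E (odd_nbrs R v) M \<and> R' = (R - incident R v) + M)"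

definition extraction_result :: "'v edge set \<Rightarrow> 'v edge multiset \<Rightarrow> 'v \<Rightarrow> 'v edge multiset \<Rightarrow> bool" where
  "extraction_result E R v R' \<longleftrightarrow>
     (\<not> cut_vertex (verts R) R v \<and> extract_a E R v R') \<or>
     (cut_vertex (verts R) R v \<and> card {H. is_block R H \<and> v \<in> fst H} = 2 \<and>
      (\<exists>A B a b. is_block R A \<and> is_block R B \<and> A \<noteq> B \<and> v \<in> fst A \<and> v \<in> fst B \<and>
         a \<noteq> v \<and> Upair a v \<in># snd A \<and> b \<noteq> v \<and> Upair b v \<in># snd B \<and>
         (let R'' = (R - {#Upair a v, Upair b v#}) + {#Upair a b#} in
            (v \<notin> verts R'' \<and> R' = R'') \<or> (v \<in> verts R'' \<and> extract_a E R'' v R'))))"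

definition extraction_applicable :: "'v edge multiset \<Rightarrow> 'v \<Rightarrow> bool" where
  "extraction_applicable R v \<longleftrightarrow> v \<in> verts R \<and> balanced R v \<and>
     card {u\<in>verts R. reach R v u} \<ge> 3 \<and>
     (\<not> cut_vertex (verts R) R v \<or> card {H. is_block R H \<and> v \<in> fst H} = 2)"

end

theory Submission
  imports Defs
begin


lemma Upair_sym: "Upair a b = Upair b a" by auto

lemma edge_rel_sym: "sym {(a, b). Upair a b \<in># X}"
  by (auto simp: sym_def Upair_sym)

lemma reach_sym: "reach X a b \<Longrightarrow> reach X b a"
  unfolding reach_def using sym_rtrancl[OF edge_rel_sym, of X] by (auto simp: sym_def)

lemma reach_refl[simp]: "reach X a a" by (simp add: reach_def)

lemma reach_trans: "reach X a b \<Longrightarrow> reach X b c \<Longrightarrow> reach X a c"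
  unfolding reach_def by (meson rtrancl_trans)

lemma reach_edge: "Upair a b \<in># X \<Longrightarrow> reach X a b"
  unfolding reach_def by auto

lemma reach_mono: "reach X a b \<Longrightarrow> set_mset X \<subseteq> set_mset Y \<Longrightarrow> reach Y a b"
  unfolding reach_def
  by (erule rtrancl_mono[THEN subsetD, rotated]) auto

lemma reach_mono_sub: "(\<And>p q. Upair p q \<in># X \<Longrightarrow> reach Y p q) \<Longrightarrow> reach X a b \<Longrightarrow> reach Y a b"
proof -
  assume h: "\<And>p q. Upair p q \<in># X \<Longrightarrow> reach Y p q" and r: "reach X a b"
  have "{(a, b). Upair a b \<in># X} \<subseteq> {(a, b). Upair a b \<in># Y}\<^sup>*"
    using h unfolding reach_def by auto
  then show ?thesis using r unfolding reach_def using rtrancl_subset_rtrancl by blast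
qed

lemma verts_plus[simp]: "verts (A + B) = verts A \<union> verts B"
  by (auto simp: verts_def)

lemma verts_finite: "finite (verts X)"
  by (auto simp: verts_def)

lemma in_verts: "e \<in># X \<Longrightarrow> x \<in> set_uprod e \<Longrightarrow> x \<in> verts X"
  by (auto simp: verts_def)

lemma edge_two: "v \<in> set_uprod e \<Longrightarrow> p \<in> set_uprod e \<Longrightarrow> p \<noteq> v \<Longrightarrow> e = Upair p v"
  by (cases e) auto

lemma reach_verts: "reach X a b \<Longrightarrow> a \<noteq> b \<Longrightarrow> a \<in> verts X \<and> b \<in> verts X"
  unfolding reach_def
proof (induction rule: rtrancl_induct)
  case base then show ?case by simp
next
  case (step y z)
  then show ?case by (cases "a = y") (auto intro: in_verts)
qed

lemma reach_first_edge: "reach X a b \<Longrightarrow> a \<noteq> b \<Longrightarrow> \<exists>y. Upair a y \<in># X"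
  unfolding reach_def by (erule converse_rtranclE) auto

lemma deg_plus[simp]: "deg (A + B) u = deg A u + deg B u"
  by (simp add: deg_def)

lemma remove_vertex_sub: "remove_vertex v X \<subseteq># X"
  by (simp add: remove_vertex_def)

lemma diff_incident: "X - incident X v = remove_vertex v X"
  by (rule multiset_eqI) (simp add: incident_def remove_vertex_def)

lemma X_split: "X = remove_vertex v X + incident X v"
  by (rule multiset_eqI) (simp add: incident_def remove_vertex_def)

lemma sum_if_size: "(\<Sum>e\<in>#N. (if P e then 1 else 0::nat)) = size (filter_mset P N)"
  by (induction N) auto

lemma sum_mset_swap: "(\<Sum>u\<in>W. \<Sum>e\<in>#N. F u e) = (\<Sum>e\<in>#N. \<Sum>u\<in>W. (F u e :: nat))"
  by (induction N) (auto simp: sum.distrib)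

lemma verts_S_v: "v \<notin> verts S \<Longrightarrow> deg S v = 0"
  unfolding deg_def verts_def
  by (induction S) auto



lemma reach_transfer:
  assumes vS: "v \<notin> verts S"
  and h1: "\<forall>e\<in>#X. v \<notin> set_uprod e \<longrightarrow> e \<in># Y"
  and h2: "\<forall>p q. Upair p q \<in># Y \<longrightarrow> reach X p q"
  and h3: "\<forall>p. p \<noteq> v \<longrightarrow> Upair p v \<in># X \<longrightarrow> reach (remove_vertex v Y) p p0"
  and uv: "u \<noteq> v" and wv: "w \<noteq> v"
  shows "reach (Y+S) u w \<longleftrightarrow> reach (X+S) u w"
proof
  assume "reach (Y+S) u w"
  then show "reach (X+S) u w"
  proof (rule reach_mono_sub[rotated])
    fix p q assume "Upair p q \<in># Y + S"
    then have "Upair p q \<in># Y \<or> Upair p q \<in># S" by simp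
    then show "reach (X + S) p q"
    proof
      assume "Upair p q \<in># Y"
      then have "reach X p q" using h2 by blast
      then show ?thesis by (rule reach_mono) auto
    next
      assume "Upair p q \<in># S" then show ?thesis by (auto intro: reach_edge)
    qed
  qed
next
  define f where "f x = (if x = v then p0 else x)" for x
  have h3': "reach (Y+S) p p0" if "p \<noteq> v" "Upair p v \<in># X" for p
    using h3 that reach_mono[of "remove_vertex v Y" p p0 "Y+S"] remove_vertex_sub
    by (metis mset_subset_eqD subsetI union_iff)
  have vS': "Upair p q \<notin># S" if "v \<in> {p, q}" for p q
    using vS that unfolding verts_def by auto
  assume "reach (X+S) u w"
  then have "(u, w) \<in> {(a, b). Upair a b \<in># X+S}\<^sup>*" by (simp add: reach_def)
  then have "reach (Y+S) (f u) (f w)"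
  proof (induction rule: rtrancl_induct)
    case base then show ?case by simp
  next
    case (step y z)
    then have e: "Upair y z \<in># X + S" by simp
    have "reach (Y+S) (f y) (f z)"
    proof (cases "y = v")
      case True
      show ?thesis
      proof (cases "z = v")
        case True with \<open>y = v\<close> show ?thesis by simp
      next
        case False
        with e \<open>y = v\<close> vS' have "Upair z v \<in># X" by (auto simp: Upair_sym)
        with h3' False have "reach (Y+S) z p0" by blast
        then show ?thesis using True False by (simp add: f_def reach_sym)
      qed
    next
      case False
      show ?thesis
      proof (cases "z = v")
        case True
        with e False vS' have "Upair y v \<in># X" by auto
        with h3' False have "reach (Y+S) y p0" by blast
        then show ?thesis using True False by (simp add: f_def)
      next
        case False
        with e \<open>y \<noteq> v\<close> h1 have "Upair y z \<in># Y + S" by auto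
        then show ?thesis using False \<open>y \<noteq> v\<close> by (simp add: f_def reach_edge)
      qed
    qed
    with step.IH show ?case by (rule reach_trans)
  qed
  then show "reach (Y+S) u w" using uv wv by (simp add: f_def)
qed



definition good :: "('v edge \<Rightarrow> nat) \<Rightarrow> 'v edge multiset \<Rightarrow> 'v edge multiset \<Rightarrow> 'v \<Rightarrow> bool" where
  "good \<omega> X Y v \<longleftrightarrow> verts Y = verts X - {v} \<and> (\<Sum>e\<in>#Y. \<omega> e) \<le> (\<Sum>e\<in>#X. \<omega> e) \<and> size Y \<le> size X \<and>
     (\<forall>u. u \<noteq> v \<longrightarrow> (even (deg Y u) \<longleftrightarrow> even (deg X u))) \<and>
     (\<forall>S u w. v \<notin> verts S \<longrightarrow> u \<noteq> v \<longrightarrow> w \<noteq> v \<longrightarrow> (reach (Y+S) u w \<longleftrightarrow> reach (X+S) u w))"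

lemma good_trans: "good \<omega> X Y v \<Longrightarrow> good \<omega> Y Z v \<Longrightarrow> good \<omega> X Z v"
  unfolding good_def by (metis Diff_idemp le_trans)

lemma deg_as_size: "(\<forall>e\<in>#N. e \<noteq> Upair u u) \<Longrightarrow> deg N u = size (filter_mset (\<lambda>e. u \<in> set_uprod e) N)"
  unfolding deg_def by (induction N) auto

lemma sum_ge_elem: "x \<in># N \<Longrightarrow> (F x::nat) \<le> (\<Sum>e\<in>#N. F e)"
  by (metis le_add1 multi_member_split sum_mset.insert image_mset_add_mset)

lemma sum_ind_subset: "finite A \<Longrightarrow> S \<subseteq> A \<Longrightarrow> (\<Sum>u\<in>A. if u \<in> S then g u else (0::nat)) = sum g S"
  by (simp add: sum.If_cases Int_absorb1 Int_commute)

lemma odd_nbrsD: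
  assumes "u \<in> odd_nbrs X v" shows "u \<noteq> v" "Upair u v \<in># X"
proof -
  show "u \<noteq> v" using assms by (simp add: odd_nbrs_def)
  from assms have "odd (size (filter_mset (\<lambda>e. u \<in> set_uprod e) (incident X v)))"
    by (simp add: odd_nbrs_def)
  then have "filter_mset (\<lambda>e. u \<in> set_uprod e) (incident X v) \<noteq> {#}"
    by (metis dvd_0_right size_empty)
  then obtain e where "e \<in># filter_mset (\<lambda>e. u \<in> set_uprod e) (incident X v)"
    by (metis multiset_nonemptyE)
  then have "e \<in># incident X v" "u \<in> set_uprod e" by auto
  then have "e \<in># X" "v \<in> set_uprod e" by (auto simp: incident_def)
  with \<open>u \<in> set_uprod e\<close> \<open>u \<noteq> v\<close> show "Upair u v \<in># X" using edge_two by metis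
qed

lemma odd_nbrs_sub: "odd_nbrs X v \<subseteq> verts X - {v}"
  using odd_nbrsD by (fastforce intro: in_verts)

lemma odd_nbrs_finite: "finite (odd_nbrs X v)"
  using odd_nbrs_sub verts_finite by (meson finite_Diff finite_subset)



lemma extract_a_good:
  fixes \<omega> :: "'v edge \<Rightarrow> nat"
  assumes XE: "set_mset X \<subseteq> E" and EV: "\<forall>e\<in>E. set_uprod e \<subseteq> V"
  and tri: "\<forall>u\<in>V. \<forall>v\<in>V. \<forall>w\<in>V. Upair u w \<in> E \<longrightarrow> Upair u v \<in> E \<longrightarrow> Upair v w \<in> E \<longrightarrow>
        \<omega> (Upair u w) \<le> \<omega> (Upair u v) + \<omega> (Upair v w)"
  and ext: "extract_a E X v Y"
  and H: "\<forall>p. p \<noteq> v \<longrightarrow> Upair p v \<in># X \<longrightarrow> (\<exists>e\<in>#X. p \<in> set_uprod e \<and> v \<notin> set_uprod e)"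
  and P0: "\<forall>p. p \<noteq> v \<longrightarrow> Upair p v \<in># X \<longrightarrow> reach (remove_vertex v X) p p0"
  shows "good \<omega> X Y v"
proof -
  define Ov where "Ov = odd_nbrs X v"
  define N where "N = incident X v"
  obtain M where pm: "perfect_matching E Ov M" and Y: "Y = remove_vertex v X + M"
    using ext by (auto simp: extract_a_def Ov_def diff_incident)
  have ME: "set_mset M \<subseteq> E" and Me: "\<And>e. e \<in># M \<Longrightarrow> set_uprod e \<subseteq> Ov \<and> proper_uprod e"
    and Mu: "\<And>u. u \<in> Ov \<Longrightarrow> size (filter_mset (\<lambda>e. u \<in> set_uprod e) M) = 1"
    using pm by (auto simp: perfect_matching_def)
  have finO: "finite Ov" by (simp add: Ov_def odd_nbrs_finite)
  have OvD: "u \<noteq> v" "Upair u v \<in># X" if "u \<in> Ov" for u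
    using odd_nbrsD[of u X v] that by (auto simp: Ov_def)
  have Xs: "X = remove_vertex v X + N" by (simp add: N_def X_split[symmetric])
  have rvX: "e \<in># remove_vertex v X \<longleftrightarrow> e \<in># X \<and> v \<notin> set_uprod e" for e
    by (simp add: remove_vertex_def)
  have Nin: "e \<in># N \<longleftrightarrow> e \<in># X \<and> v \<in> set_uprod e" for e
    by (simp add: N_def incident_def)
  have Mnot: "u \<notin> set_uprod e" if "e \<in># M" "u \<notin> Ov" for e u
    using Me[OF that(1)] that(2) by auto
  have vY: "verts Y = verts X - {v}"
  proof
    show "verts Y \<subseteq> verts X - {v}"
    proof
      fix x assume "x \<in> verts Y"
      then obtain e where e: "e \<in># Y" "x \<in> set_uprod e" by (auto simp: verts_def)
      show "x \<in> verts X - {v}"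
      proof (cases "e \<in># M")
        case True
        then have "x \<in> Ov" using Me e(2) by blast
        then show ?thesis using odd_nbrs_sub[of X v] unfolding Ov_def by blast
      next
        case False
        then have "e \<in># X" "v \<notin> set_uprod e" using e Y rvX by auto
        then show ?thesis using e(2) in_verts by fastforce
      qed
    qed
  next
    show "verts X - {v} \<subseteq> verts Y"
    proof
      fix x assume x: "x \<in> verts X - {v}"
      then obtain e where e: "e \<in># X" "x \<in> set_uprod e" unfolding verts_def by auto
      have "\<exists>e\<in>#X. x \<in> set_uprod e \<and> v \<notin> set_uprod e"
      proof (cases "v \<in> set_uprod e")
        case True
        then have "e = Upair x v" using edge_two[of v e x] e x by auto
        then show ?thesis using H e x by auto
      next
        case False then show ?thesis using e by blast
      qed
      then obtain e' where "e' \<in># X" "x \<in> set_uprod e'" "v \<notin> set_uprod e'" by blast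
      then have "e' \<in># Y" using Y rvX by auto
      then show "x \<in> verts Y" using \<open>x \<in> set_uprod e'\<close> in_verts by fast
    qed
  qed
  have degs: "even (deg Y u) \<longleftrightarrow> even (deg X u)" if uv: "u \<noteq> v" for u
  proof -
    have dN: "deg N u = size (filter_mset (\<lambda>e. u \<in> set_uprod e) N)"
      by (rule deg_as_size) (use Nin uv in auto)
    have dM: "deg M u = size (filter_mset (\<lambda>e. u \<in> set_uprod e) M)"
      by (rule deg_as_size) (use Me in fastforce)
    have dX: "deg X u = deg (remove_vertex v X) u + deg N u"
      using Xs by (metis deg_plus)
    have dY: "deg Y u = deg (remove_vertex v X) u + deg M u"
      using Y by simp
    show ?thesis
    proof (cases "u \<in> Ov")
      case True
      then have "odd (deg N u)" "deg M u = 1" using dN dM Mu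
        by (auto simp: Ov_def odd_nbrs_def N_def)
      then show ?thesis using dX dY by auto
    next
      case False
      then have "even (deg N u)" using dN uv by (auto simp: Ov_def odd_nbrs_def N_def)
      moreover have "deg M u = 0" using dM Mnot[of _ u] False by (simp add: size_eq_0_iff_empty)
      ultimately show ?thesis using dX dY by auto
    qed
  qed
  have reachs: "reach (Y+S) u w \<longleftrightarrow> reach (X+S) u w"
    if "v \<notin> verts S" "u \<noteq> v" "w \<noteq> v" for S u w
  proof (rule reach_transfer[OF that(1) _ _ _ that(2,3), of X Y p0])
    show "\<forall>e\<in>#X. v \<notin> set_uprod e \<longrightarrow> e \<in># Y" using Y rvX by auto
    show "\<forall>p q. Upair p q \<in># Y \<longrightarrow> reach X p q"
    proof (intro allI impI)
      fix p q assume "Upair p q \<in># Y"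
      then consider "Upair p q \<in># X" | "Upair p q \<in># M" using Y rvX by auto
      then show "reach X p q"
      proof cases
        case 1 then show ?thesis by (rule reach_edge)
      next
        case 2
        then have "p \<in> Ov" "q \<in> Ov" using Me[of "Upair p q"] by auto
        then have "reach X p v" "reach X q v" using OvD reach_edge by metis+
        then show ?thesis using reach_trans reach_sym by metis
      qed
    qed
    show "\<forall>p. p \<noteq> v \<longrightarrow> Upair p v \<in># X \<longrightarrow> reach (remove_vertex v Y) p p0"
    proof (intro allI impI)
      fix p assume "p \<noteq> v" "Upair p v \<in># X"
      then have "reach (remove_vertex v X) p p0" using P0 by blast
      moreover have "set_mset (remove_vertex v X) \<subseteq> set_mset (remove_vertex v Y)"
        using Y by (auto simp: remove_vertex_def)
      ultimately show "reach (remove_vertex v Y) p p0" by (rule reach_mono)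
    qed
  qed
  have cnt: "(\<Sum>u\<in>Ov. size (filter_mset (\<lambda>e. u \<in> set_uprod e) K)) = (\<Sum>e\<in>#K. card {u\<in>Ov. u \<in> set_uprod e})" for K
  proof -
    have "(\<Sum>u\<in>Ov. size (filter_mset (\<lambda>e. u \<in> set_uprod e) K)) = (\<Sum>u\<in>Ov. \<Sum>e\<in>#K. if u \<in> set_uprod e then 1 else 0)"
      by (simp add: sum_if_size)
    also have "\<dots> = (\<Sum>e\<in>#K. \<Sum>u\<in>Ov. if u \<in> set_uprod e then 1 else 0)" by (rule sum_mset_swap)
    also have "\<dots> = (\<Sum>e\<in>#K. card {u\<in>Ov. u \<in> set_uprod e})"
      using finO by (simp add: sum.If_cases Int_def)
    finally show ?thesis .
  qed
  have sizeM: "2 * size M = card Ov"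
  proof -
    have "card Ov = (\<Sum>u\<in>Ov. size (filter_mset (\<lambda>e. u \<in> set_uprod e) M))" using Mu by simp
    also have "\<dots> = (\<Sum>e\<in>#M. card {u\<in>Ov. u \<in> set_uprod e})" by (rule cnt)
    also have "\<dots> = (\<Sum>e\<in>#M. 2)"
    proof (rule arg_cong[where f=sum_mset], rule image_mset_cong)
      fix e assume "e \<in># M"
      then have "set_uprod e \<subseteq> Ov" "proper_uprod e" using Me by auto
      moreover obtain a b where ab: "e = Upair a b" by (cases e)
      ultimately have "{u\<in>Ov. u \<in> set_uprod e} = {a, b}" "a \<noteq> b" by auto
      then show "card {u\<in>Ov. u \<in> set_uprod e} = 2" by simp
    qed
    finally show ?thesis by simp
  qed
  have sizeN: "card Ov \<le> size N"
  proof -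
    have "card Ov = (\<Sum>u\<in>Ov. 1)" by simp
    also have "\<dots> \<le> (\<Sum>u\<in>Ov. size (filter_mset (\<lambda>e. u \<in> set_uprod e) N))"
    proof (rule sum_mono)
      fix u assume "u \<in> Ov"
      then have "odd (size (filter_mset (\<lambda>e. u \<in> set_uprod e) N))" by (simp add: Ov_def odd_nbrs_def N_def)
      then show "1 \<le> size (filter_mset (\<lambda>e. u \<in> set_uprod e) N)" by (cases "size (filter_mset (\<lambda>e. u \<in> set_uprod e) N)") auto
    qed
    also have "\<dots> = (\<Sum>e\<in>#N. card {u\<in>Ov. u \<in> set_uprod e})" by (rule cnt)
    also have "\<dots> \<le> (\<Sum>e\<in>#N. 1)"
    proof (rule sum_mset_mono)
      fix e assume "e \<in># N"
      then have "v \<in> set_uprod e" using Nin by auto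
      then obtain y where "e = Upair v y" by (cases e) auto
      then have "{u\<in>Ov. u \<in> set_uprod e} \<subseteq> {y}" using OvD(1) by auto
      then have "card {u\<in>Ov. u \<in> set_uprod e} \<le> card {y}" by (intro card_mono) auto
      then show "card {u\<in>Ov. u \<in> set_uprod e} \<le> 1" by simp
    qed
    finally show ?thesis by simp
  qed
  have cN: "card {u\<in>Ov. u \<in> set_uprod e} \<le> 1" if "e \<in># N" for e
  proof -
    have "v \<in> set_uprod e" using Nin that by auto
    then obtain y where "e = Upair v y" by (cases e) auto
    then have "{u\<in>Ov. u \<in> set_uprod e} \<subseteq> {y}" using OvD(1) by auto
    then have "card {u\<in>Ov. u \<in> set_uprod e} \<le> card {y}" by (intro card_mono) auto
    then show ?thesis by simp
  qed
  have sum_if_c: "(\<Sum>e\<in>#K. if P e then c else 0) = c * size (filter_mset P K)" for K P and c :: nat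
    by (induction K) auto
  have wM: "(\<Sum>e\<in>#M. \<omega> e) \<le> (\<Sum>e\<in>#N. \<omega> e)"
  proof -
    define g where "g u = \<omega> (Upair u v)" for u
    have inV: "x \<in> V" if "x \<in> Ov" for x
    proof -
      have "Upair x v \<in> E" using OvD(2)[OF that] XE by auto
      then show ?thesis using EV by auto
    qed
    have vV: "v \<in> V" if ne: "Ov \<noteq> {}"
    proof -
      obtain x where "x \<in> Ov" using ne by auto
      have "Upair x v \<in> E" using OvD(2)[OF \<open>x \<in> Ov\<close>] XE by auto
      then show ?thesis using EV by auto
    qed
    have "(\<Sum>e\<in>#M. \<omega> e) \<le> (\<Sum>e\<in>#M. \<Sum>u\<in>Ov. if u \<in> set_uprod e then g u else 0)"
    proof (rule sum_mset_mono)
      fix e assume e: "e \<in># M"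
      then have sub: "set_uprod e \<subseteq> Ov" "proper_uprod e" using Me by auto
      obtain x y where xy: "e = Upair x y" by (cases e)
      with sub have xyO: "x \<in> Ov" "y \<in> Ov" "x \<noteq> y" by auto
      have "(\<Sum>u\<in>Ov. if u \<in> set_uprod e then g u else 0) = sum g (set_uprod e)"
        by (rule sum_ind_subset[OF finO sub(1)])
      also have "\<dots> = g x + g y" using xy xyO by simp
      finally have eq: "(\<Sum>u\<in>Ov. if u \<in> set_uprod e then g u else 0) = g x + g y" .
      have E1: "Upair x y \<in> E" using e xy ME by auto
      have E2: "Upair x v \<in> E" using OvD(2)[OF xyO(1)] XE by auto
      have E3: "Upair v y \<in> E" using OvD(2)[OF xyO(2)] XE by (auto simp: Upair_sym)
      have "\<omega> (Upair x y) \<le> \<omega> (Upair x v) + \<omega> (Upair v y)"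
        using tri inV[OF xyO(1)] inV[OF xyO(2)] vV E1 E2 E3 xyO(1) by blast
      then show "\<omega> e \<le> (\<Sum>u\<in>Ov. if u \<in> set_uprod e then g u else 0)"
        using eq xy by (simp add: g_def Upair_sym)
    qed
    also have "\<dots> = (\<Sum>u\<in>Ov. \<Sum>e\<in>#M. if u \<in> set_uprod e then g u else 0)"
      by (rule sum_mset_swap[symmetric])
    also have "\<dots> = (\<Sum>u\<in>Ov. g u)"
      by (rule sum.cong) (simp_all add: sum_if_c Mu)
    also have "\<dots> \<le> (\<Sum>u\<in>Ov. \<Sum>e\<in>#N. if u \<in> set_uprod e then \<omega> e else 0)"
    proof (rule sum_mono)
      fix u assume u: "u \<in> Ov"
      have "Upair u v \<in># N" using OvD(2)[OF u] Nin by auto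
      from sum_ge_elem[OF this, of "\<lambda>e. if u \<in> set_uprod e then \<omega> e else 0"]
      show "g u \<le> (\<Sum>e\<in>#N. if u \<in> set_uprod e then \<omega> e else 0)" by (simp add: g_def)
    qed
    also have "\<dots> = (\<Sum>e\<in>#N. \<Sum>u\<in>Ov. if u \<in> set_uprod e then \<omega> e else 0)"
      by (rule sum_mset_swap)
    also have "\<dots> \<le> (\<Sum>e\<in>#N. \<omega> e)"
    proof (rule sum_mset_mono)
      fix e assume e: "e \<in># N"
      have "(\<Sum>u\<in>Ov. if u \<in> set_uprod e then \<omega> e else 0) = card {u\<in>Ov. u \<in> set_uprod e} * \<omega> e"
        using finO by (simp add: sum.If_cases Int_def)
      also have "\<dots> \<le> 1 * \<omega> e" using cN[OF e] by (intro mult_right_mono) auto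
      finally show "(\<Sum>u\<in>Ov. if u \<in> set_uprod e then \<omega> e else 0) \<le> \<omega> e" by simp
    qed
    finally show ?thesis .
  qed
  have wX: "(\<Sum>e\<in>#X. \<omega> e) = (\<Sum>e\<in>#remove_vertex v X. \<omega> e) + (\<Sum>e\<in>#N. \<omega> e)"
    by (subst Xs) simp
  have sX: "size X = size (remove_vertex v X) + size N"
    by (subst Xs) simp
  show ?thesis unfolding good_def
    using vY degs reachs wM wX sX sizeM sizeN Y by auto
qed


definition crel :: "'v set \<Rightarrow> 'v edge multiset \<Rightarrow> ('v \<times> 'v) set" where
  "crel VH EH = {(a, b). a \<in> VH \<and> b \<in> VH \<and> reach EH a b}"

lemma ncomp_crel: "ncomp VH EH = card (VH // crel VH EH)"
  by (simp add: ncomp_def crel_def)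

lemma crel_equiv: "equiv VH (crel VH EH)"
proof (rule equivI)
  show "crel VH EH \<subseteq> VH \<times> VH" by (auto simp: crel_def)
  show "refl_on VH (crel VH EH)" by (auto simp: crel_def refl_on_def)
  show "sym (crel VH EH)"
  proof (rule symI)
    fix a b assume "(a, b) \<in> crel VH EH" then show "(b, a) \<in> crel VH EH"
      by (simp add: crel_def reach_sym)
  qed
  show "trans (crel VH EH)"
  proof (rule transI)
    fix a b c assume "(a, b) \<in> crel VH EH" "(b, c) \<in> crel VH EH"
    then show "(a, c) \<in> crel VH EH"
      using reach_trans[of EH a b c] by (simp add: crel_def)
  qed
qed

lemma crel_class: "x \<in> VH \<Longrightarrow> crel VH EH `` {x} = {y\<in>VH. reach EH x y}"
  by (auto simp: crel_def)

lemma finite_crel_quot: "finite VH \<Longrightarrow> finite (VH // crel VH EH)"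
  by (rule finite_quotient) (auto simp: crel_def)

lemma ncomp_le1:
  assumes "finite VH" "ncomp VH EH \<le> 1" "p \<in> VH" "q \<in> VH"
  shows "reach EH p q"
proof -
  have fin: "finite (VH // crel VH EH)" using assms(1) by (rule finite_crel_quot)
  have "crel VH EH `` {p} \<in> VH // crel VH EH" "crel VH EH `` {q} \<in> VH // crel VH EH"
    using assms(3,4) by (auto intro: quotientI)
  moreover have "card (VH // crel VH EH) \<le> Suc 0" using assms(2) by (simp add: ncomp_crel)
  then have "\<forall>a\<in>VH // crel VH EH. \<forall>b\<in>VH // crel VH EH. a = b"
    using card_le_Suc0_iff_eq[OF fin] by simp
  ultimately have eq: "crel VH EH `` {p} = crel VH EH `` {q}" by simp
  have "(q, q) \<in> crel VH EH" using assms(4) by (simp add: crel_def)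
  then have "q \<in> crel VH EH `` {p}" using eq by simp
  then have "(p, q) \<in> crel VH EH" by simp
  then show ?thesis by (simp add: crel_def)
qed

lemma crel_full:
  assumes "\<forall>p\<in>VH. \<forall>q\<in>VH. reach EH p q" "x \<in> VH"
  shows "crel VH EH `` {x} = VH"
  using assms by (auto simp: crel_def)

lemma quot_full:
  assumes "\<forall>p\<in>VH. \<forall>q\<in>VH. reach EH p q"
  shows "VH // crel VH EH \<subseteq> {VH}"
proof
  fix c assume "c \<in> VH // crel VH EH"
  then obtain x where "c = crel VH EH `` {x}" "x \<in> VH" by (rule quotientE)
  then show "c \<in> {VH}" using crel_full[OF assms] by simp
qed

lemma ncomp_conn_le1:
  assumes "\<forall>p\<in>VH. \<forall>q\<in>VH. reach EH p q"
  shows "ncomp VH EH \<le> 1"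
proof -
  have "VH // crel VH EH \<subseteq> {VH}"
    using assms by (rule quot_full)
  then have "card (VH // crel VH EH) \<le> card {VH}" by (intro card_mono) auto
  then show ?thesis by (simp add: ncomp_crel)
qed

lemma ncomp_conn_1:
  assumes "VH \<noteq> {}" "\<forall>p\<in>VH. \<forall>q\<in>VH. reach EH p q"
  shows "ncomp VH EH = 1"
proof -
  obtain x where x: "x \<in> VH" using assms(1) by auto
  have "VH // crel VH EH = {VH}"
  proof
    show "VH // crel VH EH \<subseteq> {VH}"
      using assms(2) by (rule quot_full)
    have "crel VH EH `` {x} = VH" using x assms(2) by (simp add: crel_full)
    then show "{VH} \<subseteq> VH // crel VH EH" using quotientI[OF x, of "crel VH EH"] by auto
  qed
  then show ?thesis by (simp add: ncomp_crel)
qed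

lemma verts_sub_finite: "VH \<subseteq> verts R \<Longrightarrow> finite VH"
  by (rule finite_subset[OF _ verts_finite])

lemma cand_remove:
  assumes bc: "block_candidate R VH EH" and p: "p \<in> VH - {x}" and q: "q \<in> VH - {x}"
  shows "reach (remove_vertex x EH) p q"
proof -
  have sub: "subgraph_of R VH EH" and con: "connected_graph VH EH" and nc: "\<not> cut_vertex VH EH x"
    using bc by (simp_all add: block_candidate_def)
  from sub have "VH \<subseteq> verts R" by (simp add: subgraph_of_def)
  then have fin: "finite VH" by (rule verts_sub_finite)
  have n1: "ncomp VH EH = 1" using con by (intro ncomp_conn_1) (auto simp: connected_graph_def)
  show ?thesis
  proof (cases "x \<in> VH")
    case True
    then have "ncomp (VH - {x}) (remove_vertex x EH) \<le> 1" using nc n1 True by (simp add: cut_vertex_def)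
    from ncomp_le1[OF _ this p q] fin show ?thesis by simp
  next
    case False
    have "reach EH p q" using con p q unfolding connected_graph_def by blast
    moreover have "set_mset EH \<subseteq> set_mset (remove_vertex x EH)"
    proof
      fix e assume "e \<in># EH"
      then have "set_uprod e \<subseteq> verts EH" by (auto simp: verts_def)
      then have "x \<notin> set_uprod e" using sub False by (auto simp: subgraph_of_def)
      then show "e \<in># remove_vertex x EH" using \<open>e \<in># EH\<close> by (simp add: remove_vertex_def)
    qed
    ultimately show ?thesis by (rule reach_mono)
  qed
qed

lemma cand_noncut:
  assumes "connected_graph VH EH" "finite VH"
    and "\<forall>x. \<forall>p\<in>VH - {x}. \<forall>q\<in>VH - {x}. reach (remove_vertex x EH) p q"
  shows "\<not> cut_vertex VH EH x"
proof -
  have "ncomp VH EH = 1" using assms(1) by (intro ncomp_conn_1) (auto simp: connected_graph_def)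
  moreover have "ncomp (VH - {x}) (remove_vertex x EH) \<le> 1"
    using assms(3) by (intro ncomp_conn_le1) blast
  ultimately show ?thesis by (simp add: cut_vertex_def)
qed

lemma cand_union:
  assumes A: "block_candidate R VA EA" and B: "block_candidate R VB EB"
    and c: "c1 \<noteq> c2" "c1 \<in> VA" "c1 \<in> VB" "c2 \<in> VA" "c2 \<in> VB"
  shows "block_candidate R (VA \<union> VB) (EA \<union># EB)"
proof -
  have sA: "subgraph_of R VA EA" and cA: "connected_graph VA EA"
    and sB: "subgraph_of R VB EB" and cB: "connected_graph VB EB"
    using A B by (auto simp: block_candidate_def)
  have monoA: "set_mset (remove_vertex x EA) \<subseteq> set_mset (remove_vertex x (EA \<union># EB))" for x
    by (auto simp: remove_vertex_def)
  have monoB: "set_mset (remove_vertex x EB) \<subseteq> set_mset (remove_vertex x (EA \<union># EB))" for x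
    by (auto simp: remove_vertex_def)
  have sub: "subgraph_of R (VA \<union> VB) (EA \<union># EB)"
    using sA sB by (auto simp: subgraph_of_def verts_def intro: subset_mset.sup_least)
  from sA sB have "VA \<union> VB \<subseteq> verts R" by (simp add: subgraph_of_def)
  then have fin: "finite (VA \<union> VB)" by (rule verts_sub_finite)
  have key: "reach (remove_vertex x (EA \<union># EB)) p q"
    if p: "p \<in> VA \<union> VB - {x}" and q: "q \<in> VA \<union> VB - {x}" for x p q
  proof -
    obtain c where c: "c \<in> VA" "c \<in> VB" "c \<noteq> x"
    proof (cases "c1 = x")
      case True then show ?thesis using that[of c2] c by auto
    next
      case False then show ?thesis using that[of c1] c by auto
    qed
    have toc: "reach (remove_vertex x (EA \<union># EB)) y c" if "y \<in> VA \<union> VB - {x}" for y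
    proof (cases "y \<in> VA")
      case True
      then have "reach (remove_vertex x EA) y c" using cand_remove[OF A] that c by auto
      then show ?thesis using monoA by (rule reach_mono)
    next
      case False
      then have "reach (remove_vertex x EB) y c" using cand_remove[OF B] that c by auto
      then show ?thesis using monoB by (rule reach_mono)
    qed
    show ?thesis using reach_trans[OF toc[OF p] reach_sym[OF toc[OF q]]] .
  qed
  have con: "connected_graph (VA \<union> VB) (EA \<union># EB)"
  proof -
    have toc: "reach (EA \<union># EB) y c1" if "y \<in> VA \<union> VB" for y
    proof (cases "y \<in> VA")
      case True
      then have "reach EA y c1" using cA c by (auto simp: connected_graph_def)
      then show ?thesis by (rule reach_mono) auto
    next
      case False
      then have "reach EB y c1" using cB c that by (auto simp: connected_graph_def)
      then show ?thesis by (rule reach_mono) auto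
    qed
    show ?thesis unfolding connected_graph_def
    proof (intro conjI ballI)
      show "VA \<union> VB \<noteq> {}" using c by auto
      fix a b assume "a \<in> VA \<union> VB" "b \<in> VA \<union> VB"
      then show "reach (EA \<union># EB) a b" by (meson toc reach_sym reach_trans)
    qed
  qed
  have allk: "\<forall>x. \<forall>p\<in>VA \<union> VB - {x}. \<forall>q\<in>VA \<union> VB - {x}. reach (remove_vertex x (EA \<union># EB)) p q"
    using key by blast
  have "\<not> cut_vertex (VA \<union> VB) (EA \<union># EB) x" for x
    using cand_noncut[OF con fin allk] .
  then show ?thesis using sub con by (simp add: block_candidate_def)
qed



lemma noncut_nbrs:
  assumes nc: "\<not> cut_vertex (verts R) R v" and pv: "p \<noteq> v" and qv: "q \<noteq> v"
    and pe: "Upair p v \<in># R" and qe: "Upair q v \<in># R"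
  shows "reach (remove_vertex v R) p q"
proof (rule ccontr)
  assume nr: "\<not> reach (remove_vertex v R) p q"
  define VR where "VR = verts R"
  define V' where "V' = VR - {v}"
  define R' where "R' = remove_vertex v R"
  define r where "r = crel VR R"
  define r' where "r' = crel V' R'"
  define F where "F c = r `` c" for c
  have vV: "v \<in> VR" using pe VR_def in_verts[of "Upair p v" R v] by simp
  have pV: "p \<in> V'" using pe pv VR_def V'_def in_verts[of "Upair p v" R p] by simp
  have qV: "q \<in> V'" using qe qv VR_def V'_def in_verts[of "Upair q v" R q] by simp
  have finV': "finite V'" unfolding V'_def VR_def using verts_finite by simp
  have RR': "set_mset R' \<subseteq> set_mset R" unfolding R'_def using remove_vertex_sub by (metis set_mset_mono)
  have eqr: "equiv VR r" unfolding r_def by (rule crel_equiv)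
  have c1: "F (r' `` {x}) = r `` {x}" if x: "x \<in> V'" for x
  proof
    show "F (r' `` {x}) \<subseteq> r `` {x}"
    proof
      fix z assume "z \<in> F (r' `` {x})"
      then obtain y where y: "(x, y) \<in> r'" "(y, z) \<in> r" unfolding F_def by blast
      then have "reach R' x y" "y \<in> V'" unfolding r'_def crel_def by auto
      then have xy: "reach R x y" using RR' reach_mono by metis
      have yz: "reach R y z" and zV: "z \<in> VR" using y(2) unfolding r_def crel_def by auto
      have "reach R x z" using reach_trans[OF xy yz] .
      moreover have "x \<in> VR" using x V'_def by simp
      ultimately show "z \<in> r `` {x}" using zV unfolding r_def crel_def by simp
    qed
    show "r `` {x} \<subseteq> F (r' `` {x})"
    proof
      fix z assume "z \<in> r `` {x}"
      moreover have "(x, x) \<in> r'" using x unfolding r'_def crel_def by simp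
      ultimately show "z \<in> F (r' `` {x})" unfolding F_def by blast
    qed
  qed
  have rpv: "(p, v) \<in> r" "(q, v) \<in> r"
    using pV qV vV reach_edge[OF pe] reach_edge[OF qe] unfolding r_def crel_def V'_def by auto
  have cls: "r `` {p} = r `` {v}" "r `` {q} = r `` {v}"
    using rpv equiv_class_eq_iff[OF eqr] by blast+
  have surj: "F ` (V' // r') = VR // r"
  proof
    show "F ` (V' // r') \<subseteq> VR // r"
    proof
      fix c assume "c \<in> F ` (V' // r')"
      then obtain d where d: "d \<in> V' // r'" "c = F d" by blast
      then obtain x where x: "d = r' `` {x}" "x \<in> V'" by (auto elim: quotientE)
      then have "c = r `` {x}" "x \<in> VR" using c1 d(2) V'_def by auto
      then show "c \<in> VR // r" by (auto intro: quotientI)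
    qed
    show "VR // r \<subseteq> F ` (V' // r')"
    proof
      fix c assume "c \<in> VR // r"
      then obtain x where x: "c = r `` {x}" "x \<in> VR" by (auto elim: quotientE)
      show "c \<in> F ` (V' // r')"
      proof (cases "x = v")
        case True
        then have "c = F (r' `` {p})" using x c1[OF pV] cls by simp
        moreover have "r' `` {p} \<in> V' // r'" using pV by (rule quotientI)
        ultimately show ?thesis by blast
      next
        case False
        then have "x \<in> V'" using x V'_def by simp
        then have "c = F (r' `` {x})" "r' `` {x} \<in> V' // r'" using x c1 by (auto intro: quotientI)
        then show ?thesis by blast
      qed
    qed
  qed
  have ninj: "\<not> inj_on F (V' // r')"
  proof
    assume inj: "inj_on F (V' // r')"
    have "F (r' `` {p}) = F (r' `` {q})" using c1[OF pV] c1[OF qV] cls by simp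
    moreover have "r' `` {p} \<in> V' // r'" "r' `` {q} \<in> V' // r'" using pV qV by (auto intro: quotientI)
    ultimately have "r' `` {p} = r' `` {q}" using inj by (meson inj_onD)
    moreover have "q \<in> r' `` {q}" using qV unfolding r'_def crel_def by simp
    ultimately have "q \<in> r' `` {p}" by simp
    then have "(p, q) \<in> r'" by simp
    then show False using nr unfolding r'_def crel_def R'_def by simp
  qed
  have finQ: "finite (V' // r')" unfolding r'_def using finV' by (rule finite_crel_quot)
  have "card (F ` (V' // r')) \<noteq> card (V' // r')" using ninj inj_on_iff_eq_card[OF finQ] by blast
  moreover have "card (F ` (V' // r')) \<le> card (V' // r')" by (rule card_image_le[OF finQ])
  ultimately have "card (VR // r) < card (V' // r')" using surj by simp
  then have "cut_vertex (verts R) R v"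
    unfolding cut_vertex_def ncomp_crel using vV VR_def V'_def r_def r'_def R'_def by simp
  then show False using nc by simp
qed



lemma blocks_share:
  assumes A: "is_block R A" and B: "is_block R B" and c: "c1 \<noteq> c2" "c1 \<in> fst A" "c1 \<in> fst B"
    "c2 \<in> fst A" "c2 \<in> fst B"
  shows "A = B"
proof -
  have cA: "block_candidate R (fst A) (snd A)" and cB: "block_candidate R (fst B) (snd B)"
    using A B by (simp_all add: is_block_def)
  have U: "block_candidate R (fst A \<union> fst B) (snd A \<union># snd B)"
    by (rule cand_union[OF cA cB c])
  have mA: "\<forall>VH' EH'. block_candidate R VH' EH' \<and> fst A \<subseteq> VH' \<and> snd A \<subseteq># EH' \<longrightarrow> VH' = fst A \<and> EH' = snd A"
    using A unfolding is_block_def by (rule conjunct2)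
  have mB: "\<forall>VH' EH'. block_candidate R VH' EH' \<and> fst B \<subseteq> VH' \<and> snd B \<subseteq># EH' \<longrightarrow> VH' = fst B \<and> EH' = snd B"
    using B unfolding is_block_def by (rule conjunct2)
  have "fst A \<union> fst B = fst A \<and> snd A \<union># snd B = snd A"
    using mA[rule_format, of "fst A \<union> fst B" "snd A \<union># snd B"] U by auto
  moreover have "fst A \<union> fst B = fst B \<and> snd A \<union># snd B = snd B"
    using mB[rule_format, of "fst A \<union> fst B" "snd A \<union># snd B"] U by auto
  ultimately show ?thesis by (metis prod_eqI)
qed

lemma edge_in_block:
  assumes e: "Upair v p \<in># R" and vp: "v \<noteq> p"
  shows "\<exists>H. is_block R H \<and> v \<in> fst H \<and> p \<in> fst H \<and> Upair v p \<in># snd H"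
proof -
  define P where "P H \<longleftrightarrow> block_candidate R (fst H) (snd H) \<and> v \<in> fst H \<and> Upair v p \<in># snd H" for H
  define f where "f H = card (fst H) + size (snd H)" for H :: "'a set \<times> 'a edge multiset"
  have P0: "P ({v, p}, {#Upair v p#})"
  proof -
    have sub: "subgraph_of R {v, p} {#Upair v p#}"
      using e in_verts[OF e] by (auto simp: subgraph_of_def verts_def)
    have con: "connected_graph {v, p} {#Upair v p#}"
      unfolding connected_graph_def
    proof (intro conjI ballI)
      fix a b assume "a \<in> {v, p}" "b \<in> {v, p}"
      moreover have "reach {#Upair v p#} v p" by (rule reach_edge) simp
      ultimately show "reach {#Upair v p#} a b" using reach_sym by auto
    qed simp
    have nc: "\<not> cut_vertex {v, p} {#Upair v p#} x" for x
    proof (rule cand_noncut[OF con])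
      show "finite {v, p}" by simp
      show "\<forall>x. \<forall>a\<in>{v, p} - {x}. \<forall>b\<in>{v, p} - {x}. reach (remove_vertex x {#Upair v p#}) a b"
      proof (intro allI ballI)
        fix x a b assume a: "a \<in> {v, p} - {x}" and b: "b \<in> {v, p} - {x}"
        show "reach (remove_vertex x {#Upair v p#}) a b"
        proof (cases "a = b")
          case True then show ?thesis by simp
        next
          case False
          then have "x \<noteq> v" "x \<noteq> p" using a b by auto
          then have "remove_vertex x {#Upair v p#} = {#Upair v p#}" by (simp add: remove_vertex_def)
          moreover have "Upair a b \<in># {#Upair v p#}" using a b False by auto
          ultimately show ?thesis by (simp add: reach_edge)
        qed
      qed
    qed
    show ?thesis unfolding P_def block_candidate_def using sub con nc by simp
  qed
  have bnd: "\<forall>H. P H \<longrightarrow> f H < card (verts R) + size R + 1"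
  proof (intro allI impI)
    fix H assume "P H"
    then have "fst H \<subseteq> verts R" "snd H \<subseteq># R"
      by (auto simp: P_def block_candidate_def subgraph_of_def)
    then have "card (fst H) \<le> card (verts R)" "size (snd H) \<le> size R"
      using card_mono[OF verts_finite] size_mset_mono by auto
    then show "f H < card (verts R) + size R + 1" by (simp add: f_def)
  qed
  obtain H where PH: "P H" and mx: "\<forall>y. P y \<longrightarrow> f y \<le> f H"
    using Lattices_Big.ex_has_greatest_nat[OF P0 bnd] by blast
  have cH: "block_candidate R (fst H) (snd H)" using PH by (simp add: P_def)
  have "is_block R H" unfolding is_block_def
  proof (rule conjI[OF cH], intro allI impI)
    fix VH' EH' assume h: "block_candidate R VH' EH' \<and> fst H \<subseteq> VH' \<and> snd H \<subseteq># EH'"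
    then have "P (VH', EH')" using PH by (auto simp: P_def dest: mset_subset_eqD)
    then have le: "f (VH', EH') \<le> f H" using mx by blast
    have finV: "finite VH'" using h by (auto simp: block_candidate_def subgraph_of_def intro: verts_sub_finite)
    have c1: "card (fst H) \<le> card VH'" using h finV by (simp add: card_mono)
    have s1: "size (snd H) \<le> size EH'" using h by (simp add: size_mset_mono)
    have "card (fst H) = card VH'" "size (snd H) = size EH'" using le c1 s1 by (auto simp: f_def)
    then show "VH' = fst H \<and> EH' = snd H"
      using h finV card_subset_eq[of VH' "fst H"] mset_subset_size[of "snd H" EH']
      by (metis less_irrefl subset_mset.le_imp_less_or_eq)
  qed
  moreover have "p \<in> fst H"
  proof -
    have "Upair v p \<in># snd H" using PH by (simp add: P_def)
    then have "p \<in> verts (snd H)" by (rule in_verts) simp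
    then show ?thesis using cH by (auto simp: block_candidate_def subgraph_of_def)
  qed
  moreover have "v \<in> fst H" "Upair v p \<in># snd H" using PH by (simp_all add: P_def)
  ultimately show ?thesis by blast
qed



lemma three_elems:
  assumes "3 \<le> card C"
  shows "\<exists>w1 w2. w1 \<in> C \<and> w2 \<in> C \<and> w1 \<noteq> w2 \<and> w1 \<noteq> v \<and> w2 \<noteq> v"
proof -
  obtain a B where aB: "C = insert a B" "a \<notin> B" "2 \<le> card B" "finite B"
    using assms card_le_Suc_iff[of 2 C] by (auto simp: numeral_3_eq_3)
  obtain b D where bD: "B = insert b D" "b \<notin> D" "1 \<le> card D" "finite D"
    using aB(3) card_le_Suc_iff[of 1 B] by (auto simp: numeral_2_eq_2)
  obtain c G where cG: "D = insert c G" "c \<notin> G"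
    using bD(3) card_le_Suc_iff[of 0 D] by auto
  have "a \<noteq> b" "a \<noteq> c" "b \<noteq> c" using aB bD cG by auto
  then show ?thesis using aB bD cG by (metis insertCI)
qed

lemma path_nbr:
  assumes "reach X v w" "w \<noteq> v"
  shows "\<exists>p. p \<noteq> v \<and> Upair p v \<in># X \<and> reach (remove_vertex v X) p w"
proof -
  have "(v, w) \<in> {(a, b). Upair a b \<in># X}\<^sup>*" using assms(1) by (simp add: reach_def)
  then have "w = v \<or> (\<exists>p. p \<noteq> v \<and> Upair p v \<in># X \<and> reach (remove_vertex v X) p w)"
  proof (induction rule: rtrancl_induct)
    case base then show ?case by simp
  next
    case (step y z)
    then have e: "Upair y z \<in># X" by simp
    show ?case
    proof (cases "z = v")
      case True then show ?thesis by simp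
    next
      case zv: False
      show ?thesis
      proof (cases "y = v")
        case True
        then have "Upair z v \<in># X" using e by (simp add: Upair_sym)
        then show ?thesis using zv by auto
      next
        case False
        then obtain p where p: "p \<noteq> v" "Upair p v \<in># X" "reach (remove_vertex v X) p y"
          using step.IH by blast
        have "Upair y z \<in># remove_vertex v X" using e False zv by (simp add: remove_vertex_def)
        then have "reach (remove_vertex v X) y z" by (rule reach_edge)
        with p(3) have "reach (remove_vertex v X) p z" by (rule reach_trans)
        then show ?thesis using p by blast
      qed
    qed
  qed
  then show ?thesis using assms(2) by blast
qed

lemma final_step:
  fixes \<omega> :: "'v edge \<Rightarrow> nat"
  assumes g: "good \<omega> R R' v" and bal: "balanced R v" and pv: "p \<noteq> v" and pe: "Upair p v \<in># R"
  shows "verts R' = verts R - {v} \<and>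
      (\<Sum>e\<in>#R'. \<omega> e) \<le> (\<Sum>e\<in>#R. \<omega> e) \<and> size R' \<le> size R \<and>
      (\<forall>u\<in>verts R'. balanced R' u \<longleftrightarrow> balanced R u) \<and>
      (\<forall>u\<in>verts R'. \<forall>w\<in>verts R'. reach R' u w \<longleftrightarrow> reach R u w) \<and>
      (\<forall>S. set_mset S \<subseteq> E \<longrightarrow> verts S \<subseteq> verts R' \<longrightarrow>
           (eulerian_extension E R' S \<longleftrightarrow> eulerian_extension E R S))"
proof -
  have vR': "verts R' = verts R - {v}" and w: "(\<Sum>e\<in>#R'. \<omega> e) \<le> (\<Sum>e\<in>#R. \<omega> e)"
    and s: "size R' \<le> size R"
    and par: "\<And>u. u \<noteq> v \<Longrightarrow> even (deg R' u) \<longleftrightarrow> even (deg R u)"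
    and rch: "\<And>S u w. v \<notin> verts S \<Longrightarrow> u \<noteq> v \<Longrightarrow> w \<noteq> v \<Longrightarrow> reach (R'+S) u w \<longleftrightarrow> reach (R+S) u w"
    using g unfolding good_def by blast+
  have v0: "v \<notin> verts {#}" by (simp add: verts_def)
  have iii: "\<forall>u\<in>verts R'. balanced R' u \<longleftrightarrow> balanced R u"
    using par vR' by (auto simp: balanced_def)
  have iv: "\<forall>u\<in>verts R'. \<forall>w\<in>verts R'. reach R' u w \<longleftrightarrow> reach R u w"
    using rch[OF v0] vR' by auto
  have pR': "p \<in> verts R'" using vR' pv in_verts[OF pe, of p] by simp
  have v_ext: "eulerian (R'+S) \<longleftrightarrow> eulerian (R+S)" if SS: "verts S \<subseteq> verts R'" for S
  proof -
    have vS: "v \<notin> verts S" using SS vR' by auto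
    have dS: "deg S v = 0" using vS by (rule verts_S_v)
    have V1: "verts (R'+S) = verts R'" using SS by auto
    have V2: "verts (R+S) = verts R" using SS vR' by auto
    have par2: "balanced (R'+S) u \<longleftrightarrow> balanced (R+S) u" if "u \<noteq> v" for u
      using par[OF that] by (auto simp: balanced_def)
    have edge: "reach (R+S) v p" using pe by (intro reach_edge) (simp add: Upair_sym)
    show ?thesis
    proof
      assume eu: "eulerian (R'+S)"
      have r': "\<forall>a\<in>verts R'. \<forall>b\<in>verts R'. reach (R'+S) a b" and b': "\<forall>a\<in>verts R'. balanced (R'+S) a"
        using eu V1 by (simp_all add: eulerian_def)
      define gg where "gg x = (if x = v then p else x)" for x
      have gV: "gg x \<in> verts R'" if "x \<in> verts R" for x
        using that pR' vR' by (auto simp: gg_def)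
      have toG: "reach (R+S) x (gg x)" for x using edge by (simp add: gg_def)
      have "reach (R+S) a b" if "a \<in> verts R" "b \<in> verts R" for a b
      proof -
        have "reach (R'+S) (gg a) (gg b)" using r' gV that by blast
        then have "reach (R+S) (gg a) (gg b)" using rch[OF vS] gV that vR' by auto
        then show ?thesis using reach_trans[OF toG[of a] reach_trans[OF _ reach_sym[OF toG[of b]]]] by blast
      qed
      moreover have "balanced (R+S) a" if "a \<in> verts R" for a
      proof (cases "a = v")
        case True then show ?thesis using bal dS by (simp add: balanced_def)
      next
        case False then show ?thesis using b' par2 that vR' by auto
      qed
      ultimately show "eulerian (R+S)" using V2 by (simp add: eulerian_def)
    next
      assume eu: "eulerian (R+S)"
      have r: "\<forall>a\<in>verts R. \<forall>b\<in>verts R. reach (R+S) a b" and b: "\<forall>a\<in>verts R. balanced (R+S) a"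
        using eu V2 by (simp_all add: eulerian_def)
      have "reach (R'+S) a b" if "a \<in> verts R'" "b \<in> verts R'" for a b
        using r rch[OF vS] that vR' by auto
      moreover have "balanced (R'+S) a" if "a \<in> verts R'" for a
        using b par2 that vR' by auto
      ultimately show "eulerian (R'+S)" using V1 by (simp add: eulerian_def)
    qed
  qed
  have v: "\<forall>S. set_mset S \<subseteq> E \<longrightarrow> verts S \<subseteq> verts R' \<longrightarrow>
           (eulerian_extension E R' S \<longleftrightarrow> eulerian_extension E R S)"
    using v_ext by (simp add: eulerian_extension_def)
  show ?thesis using vR' w s iii iv v by blast
qed



lemma case_a:
  fixes \<omega> :: "'v edge \<Rightarrow> nat"
  assumes RE: "set_mset R \<subseteq> E" and EV: "\<forall>e\<in>E. set_uprod e \<subseteq> V"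
  and tri: "\<forall>u\<in>V. \<forall>v\<in>V. \<forall>w\<in>V. Upair u w \<in> E \<longrightarrow> Upair u v \<in> E \<longrightarrow> Upair v w \<in> E \<longrightarrow>
        \<omega> (Upair u w) \<le> \<omega> (Upair u v) + \<omega> (Upair v w)"
  and c3: "3 \<le> card {u\<in>verts R. reach R v u}"
  and nc: "\<not> cut_vertex (verts R) R v"
  and ext: "extract_a E R v R'"
  shows "good \<omega> R R' v \<and> (\<exists>p. p \<noteq> v \<and> Upair p v \<in># R)"
proof -
  obtain w1 w2 where w: "w1 \<in> {u\<in>verts R. reach R v u}" "w2 \<in> {u\<in>verts R. reach R v u}"
    "w1 \<noteq> w2" "w1 \<noteq> v" "w2 \<noteq> v"
    using three_elems[OF c3, of v] by blast
  obtain p1 where p1: "p1 \<noteq> v" "Upair p1 v \<in># R" "reach (remove_vertex v R) p1 w1"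
    using path_nbr[of R v w1] w by auto
  obtain p2 where p2: "p2 \<noteq> v" "Upair p2 v \<in># R" "reach (remove_vertex v R) p2 w2"
    using path_nbr[of R v w2] w by auto
  have P0: "\<forall>p. p \<noteq> v \<longrightarrow> Upair p v \<in># R \<longrightarrow> reach (remove_vertex v R) p p1"
    using noncut_nbrs[OF nc] p1 by blast
  have H: "\<forall>p. p \<noteq> v \<longrightarrow> Upair p v \<in># R \<longrightarrow> (\<exists>e\<in>#R. p \<in> set_uprod e \<and> v \<notin> set_uprod e)"
  proof (intro allI impI)
    fix p assume pv: "p \<noteq> v" and pe: "Upair p v \<in># R"
    have r1: "reach (remove_vertex v R) p w1"
      using reach_trans[OF noncut_nbrs[OF nc pv p1(1) pe p1(2)] p1(3)] .
    have r2: "reach (remove_vertex v R) p w2"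
      using reach_trans[OF noncut_nbrs[OF nc pv p2(1) pe p2(2)] p2(3)] .
    obtain w where "reach (remove_vertex v R) p w" "p \<noteq> w"
      using r1 r2 w(3) by metis
    then obtain y where "Upair p y \<in># remove_vertex v R" using reach_first_edge by metis
    then have "Upair p y \<in># R" "v \<notin> set_uprod (Upair p y)" by (simp_all add: remove_vertex_def)
    then show "\<exists>e\<in>#R. p \<in> set_uprod e \<and> v \<notin> set_uprod e" by force
  qed
  have "good \<omega> R R' v" by (rule extract_a_good[OF RE EV tri ext H P0])
  then show ?thesis using p1 by blast
qed



lemma case_b:
  fixes \<omega> :: "'v edge \<Rightarrow> nat"
  assumes RE: "set_mset R \<subseteq> E" and EV: "\<forall>e\<in>E. set_uprod e \<subseteq> V"
  and tri: "\<forall>u\<in>V. \<forall>v\<in>V. \<forall>w\<in>V. Upair u w \<in> E \<longrightarrow> Upair u v \<in> E \<longrightarrow> Upair v w \<in> E \<longrightarrow>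
        \<omega> (Upair u w) \<le> \<omega> (Upair u v) + \<omega> (Upair v w)"
  and compl: "\<forall>u\<in>V. \<forall>w\<in>V. u \<noteq> w \<longrightarrow> Upair u w \<in> E"
  and card2: "card {H. is_block R H \<and> v \<in> fst H} = 2"
  and A: "is_block R A" and B: "is_block R B" and AB: "A \<noteq> B" and vA: "v \<in> fst A" and vB: "v \<in> fst B"
  and av: "a \<noteq> v" and aA: "Upair a v \<in># snd A" and bv: "b \<noteq> v" and bB: "Upair b v \<in># snd B"
  and res: "(let R'' = (R - {#Upair a v, Upair b v#}) + {#Upair a b#} in
            (v \<notin> verts R'' \<and> R' = R'') \<or> (v \<in> verts R'' \<and> extract_a E R'' v R'))"
  shows "good \<omega> R R' v \<and> (\<exists>p. p \<noteq> v \<and> Upair p v \<in># R)"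
proof -
  have cA: "block_candidate R (fst A) (snd A)" and cB: "block_candidate R (fst B) (snd B)"
    using A B by (simp_all add: is_block_def)
  have sA: "snd A \<subseteq># R" "verts (snd A) \<subseteq> fst A" and sB: "snd B \<subseteq># R" "verts (snd B) \<subseteq> fst B"
    using cA cB by (simp_all add: block_candidate_def subgraph_of_def)
  have aR: "Upair a v \<in># R" using aA sA by (auto dest: mset_subset_eqD)
  have bR: "Upair b v \<in># R" using bB sB by (auto dest: mset_subset_eqD)
  have aFA: "a \<in> fst A" using in_verts[OF aA, of a] sA by auto
  have bFB: "b \<in> fst B" using in_verts[OF bB, of b] sB by auto
  define BS where "BS = {H. is_block R H \<and> v \<in> fst H}"
  have finBS: "finite BS" using card2 BS_def by (metis card.infinite zero_neq_numeral)
  have BSe: "BS = {A, B}"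
  proof -
    have "{A, B} \<subseteq> BS" using A B vA vB BS_def by auto
    moreover have "card {A, B} = card BS" using AB card2 BS_def by simp
    ultimately show ?thesis using card_subset_eq[OF finBS] by blast
  qed
  have ab: "a \<noteq> b"
  proof
    assume "a = b"
    then have "A = B" using blocks_share[OF A B av aFA _ vA vB] bFB by simp
    then show False using AB by simp
  qed
  have K: "reach (remove_vertex v R) p a \<or> reach (remove_vertex v R) p b"
    if pv: "p \<noteq> v" and pe: "Upair p v \<in># R" for p
  proof -
    have "Upair v p \<in># R" using pe by (simp add: Upair_sym)
    then obtain H where H: "is_block R H" "v \<in> fst H" "p \<in> fst H"
      using edge_in_block[of v p R] pv by blast
    then have "H \<in> BS" by (simp add: BS_def)
    then have "H = A \<or> H = B" using BSe by simp
    then show ?thesis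
    proof
      assume "H = A"
      then have "reach (remove_vertex v (snd A)) p a" using cand_remove[OF cA, of p v a] H pv av aFA by simp
      moreover have "set_mset (remove_vertex v (snd A)) \<subseteq> set_mset (remove_vertex v R)"
        using sA by (auto simp: remove_vertex_def dest: mset_subset_eqD)
      ultimately have "reach (remove_vertex v R) p a" by (rule reach_mono)
      then show ?thesis ..
    next
      assume "H = B"
      then have "reach (remove_vertex v (snd B)) p b" using cand_remove[OF cB, of p v b] H pv bv bFB by simp
      moreover have "set_mset (remove_vertex v (snd B)) \<subseteq> set_mset (remove_vertex v R)"
        using sB by (auto simp: remove_vertex_def dest: mset_subset_eqD)
      ultimately have "reach (remove_vertex v R) p b" by (rule reach_mono)
      then show ?thesis ..
    qed
  qed
  obtain R1 where R1: "R = add_mset (Upair a v) R1" using multi_member_split[OF aR] by blast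
  have neq: "Upair b v \<noteq> Upair a v" using ab av bv by simp
  have "Upair b v \<in># add_mset (Upair a v) R1" using bR R1 by simp
  then have bR1: "Upair b v \<in># R1" using neq by (simp del: Upair_inject)
  obtain R2 where R2': "R1 = add_mset (Upair b v) R2" using multi_member_split[OF bR1] by blast
  have R2: "R = add_mset (Upair a v) (add_mset (Upair b v) R2)" using R1 R2' by simp
  define R'' where "R'' = add_mset (Upair a b) R2"
  have R''eq: "(R - {#Upair a v, Upair b v#}) + {#Upair a b#} = R''"
    using R2 by (simp add: R''_def)
  have res': "(v \<notin> verts R'' \<and> R' = R'') \<or> (v \<in> verts R'' \<and> extract_a E R'' v R')"
    using res R''eq by (simp add: Let_def)
  have inR'': "e \<in># R''" if "e \<in># R" "v \<notin> set_uprod e" for e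
    using that R2 by (auto simp: R''_def)
  have R''R: "e \<in># R \<or> e = Upair a b" if "e \<in># R''" for e
    using that R2 by (auto simp: R''_def)
  have abin: "Upair a b \<in># remove_vertex v R''" using av bv by (simp add: R''_def remove_vertex_def)
  have rvsub: "set_mset (remove_vertex v R) \<subseteq> set_mset (remove_vertex v R'')"
    using inR'' by (auto simp: remove_vertex_def)
  have h3: "reach (remove_vertex v R'') p a" if pv: "p \<noteq> v" and pe: "Upair p v \<in># R" for p
  proof -
    from K[OF pv pe] show ?thesis
    proof
      assume "reach (remove_vertex v R) p a"
      then show ?thesis using rvsub by (rule reach_mono)
    next
      assume "reach (remove_vertex v R) p b"
      then have "reach (remove_vertex v R'') p b" using rvsub by (rule reach_mono)
      moreover have "reach (remove_vertex v R'') b a" using reach_sym[OF reach_edge[OF abin]] .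
      ultimately show ?thesis by (rule reach_trans)
    qed
  qed
  have rab: "reach R a b" using reach_trans[OF reach_edge[OF aR] reach_sym[OF reach_edge[OF bR]]] .
  have h2: "\<forall>p q. Upair p q \<in># R'' \<longrightarrow> reach R p q"
  proof (intro allI impI)
    fix p q assume "Upair p q \<in># R''"
    then have "Upair p q \<in># R \<or> Upair p q = Upair a b" by (rule R''R)
    then show "reach R p q"
    proof
      assume "Upair p q \<in># R" then show ?thesis by (rule reach_edge)
    next
      assume "Upair p q = Upair a b"
      then have "(p = a \<and> q = b) \<or> (p = b \<and> q = a)" by auto
      then show ?thesis using rab reach_sym by auto
    qed
  qed
  have reach1: "reach (R''+S) u w \<longleftrightarrow> reach (R+S) u w"
    if "v \<notin> verts S" "u \<noteq> v" "w \<noteq> v" for S u w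
    by (rule reach_transfer[OF that(1) _ h2 _ that(2,3)]) (use inR'' h3 in blast)+
  have deg1: "deg R'' u = deg R u" if uv: "u \<noteq> v" for u
    using R2 ab av bv uv by (auto simp: R''_def deg_def)
  have "Upair a v \<in> E" "Upair b v \<in> E" using aR bR RE by auto
  then have "set_uprod (Upair a v) \<subseteq> V" "set_uprod (Upair b v) \<subseteq> V" using EV by blast+
  then have aV: "a \<in> V" "v \<in> V" and bV: "b \<in> V" by auto
  have abE: "Upair a b \<in> E" using compl aV bV ab by blast
  have avE: "Upair a v \<in> E" "Upair v b \<in> E" using aR bR RE by (auto simp: Upair_sym)
  have tr: "\<omega> (Upair a b) \<le> \<omega> (Upair a v) + \<omega> (Upair v b)"
    using tri aV bV abE avE by blast
  have w1: "(\<Sum>e\<in>#R''. \<omega> e) \<le> (\<Sum>e\<in>#R. \<omega> e)"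
    using tr R2 by (simp add: R''_def Upair_sym)
  have s1: "size R'' \<le> size R" using R2 by (simp add: R''_def)
  have vs1: "verts R'' - {v} = verts R - {v}"
  proof
    show "verts R'' - {v} \<subseteq> verts R - {v}"
    proof
      fix x assume x: "x \<in> verts R'' - {v}"
      then obtain e where e: "e \<in># R''" "x \<in> set_uprod e" by (auto simp: verts_def)
      from R''R[OF e(1)] show "x \<in> verts R - {v}"
      proof
        assume "e \<in># R" then show ?thesis using e x in_verts by fast
      next
        assume "e = Upair a b"
        then have "x = a \<or> x = b" using e by auto
        then show ?thesis using x in_verts[OF aR, of a] in_verts[OF bR, of b] by auto
      qed
    qed
    show "verts R - {v} \<subseteq> verts R'' - {v}"
    proof
      fix x assume x: "x \<in> verts R - {v}"
      then obtain e where e: "e \<in># R" "x \<in> set_uprod e" by (auto simp: verts_def)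
      show "x \<in> verts R'' - {v}"
      proof (cases "v \<in> set_uprod e")
        case False
        then show ?thesis using inR''[OF e(1)] e x in_verts by fast
      next
        case True
        then have "e = Upair x v" using edge_two[of v e x] e x by auto
        then have "x = a \<or> x = b \<or> e \<in># R2" using e R2 by auto
        moreover have "a \<in> verts R''" "b \<in> verts R''"
          using in_verts[of "Upair a b" R''] by (auto simp: R''_def)
        moreover have "e \<in># R2 \<Longrightarrow> x \<in> verts R''" using e in_verts[of e R'' x] by (simp add: R''_def)
        ultimately show ?thesis using x by auto
      qed
    qed
  qed
  have pre: "(\<Sum>e\<in>#R''. \<omega> e) \<le> (\<Sum>e\<in>#R. \<omega> e) \<and> size R'' \<le> size R \<and>
     (\<forall>u. u \<noteq> v \<longrightarrow> (even (deg R'' u) \<longleftrightarrow> even (deg R u))) \<and>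
     (\<forall>S u w. v \<notin> verts S \<longrightarrow> u \<noteq> v \<longrightarrow> w \<noteq> v \<longrightarrow> (reach (R''+S) u w \<longleftrightarrow> reach (R+S) u w))"
    using w1 s1 deg1 reach1 by auto
  have "good \<omega> R R' v"
    using res'
  proof
    assume h: "v \<notin> verts R'' \<and> R' = R''"
    then have "verts R' = verts R - {v}" using vs1 by auto
    then show ?thesis using pre h unfolding good_def by simp
  next
    assume h: "v \<in> verts R'' \<and> extract_a E R'' v R'"
    have R''E: "set_mset R'' \<subseteq> E" using RE abE R''R by auto
    have P0: "\<forall>p. p \<noteq> v \<longrightarrow> Upair p v \<in># R'' \<longrightarrow> reach (remove_vertex v R'') p a"
    proof (intro allI impI)
      fix p assume pv: "p \<noteq> v" and pe: "Upair p v \<in># R''"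
      then have "Upair p v \<in># R" using R''R[OF pe] av bv by auto
      then show "reach (remove_vertex v R'') p a" by (rule h3[OF pv])
    qed
    have H: "\<forall>p. p \<noteq> v \<longrightarrow> Upair p v \<in># R'' \<longrightarrow> (\<exists>e\<in>#R''. p \<in> set_uprod e \<and> v \<notin> set_uprod e)"
    proof (intro allI impI)
      fix p assume pv: "p \<noteq> v" and pe: "Upair p v \<in># R''"
      show "\<exists>e\<in>#R''. p \<in> set_uprod e \<and> v \<notin> set_uprod e"
      proof (cases "p = a")
        case True
        then show ?thesis using av bv by (intro bexI[of _ "Upair a b"]) (auto simp: R''_def)
      next
        case False
        have "reach (remove_vertex v R'') p a" using P0 pv pe by blast
        then obtain y where "Upair p y \<in># remove_vertex v R''" using reach_first_edge False by metis
        then have "Upair p y \<in># R''" "v \<notin> set_uprod (Upair p y)" by (simp_all add: remove_vertex_def)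
        then show ?thesis by force
      qed
    qed
    have g2: "good \<omega> R'' R' v" by (rule extract_a_good[OF R''E EV tri _ H P0]) (use h in simp)
    have gv: "verts R' = verts R'' - {v}" and gw: "(\<Sum>e\<in>#R'. \<omega> e) \<le> (\<Sum>e\<in>#R''. \<omega> e)"
      and gs: "size R' \<le> size R''"
      and gp: "\<forall>u. u \<noteq> v \<longrightarrow> (even (deg R' u) \<longleftrightarrow> even (deg R'' u))"
      and gr: "\<forall>S u w. v \<notin> verts S \<longrightarrow> u \<noteq> v \<longrightarrow> w \<noteq> v \<longrightarrow> (reach (R'+S) u w \<longleftrightarrow> reach (R''+S) u w)"
      using g2 unfolding good_def by blast+
    have "verts R' = verts R - {v}" using gv vs1 by simp
    moreover have "(\<Sum>e\<in>#R'. \<omega> e) \<le> (\<Sum>e\<in>#R. \<omega> e)" using gw pre by linarith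
    moreover have "size R' \<le> size R" using gs pre by linarith
    moreover have "\<forall>u. u \<noteq> v \<longrightarrow> (even (deg R' u) \<longleftrightarrow> even (deg R u))" using gp pre by simp
    moreover have "\<forall>S u w. v \<notin> verts S \<longrightarrow> u \<noteq> v \<longrightarrow> w \<noteq> v \<longrightarrow> (reach (R'+S) u w \<longleftrightarrow> reach (R+S) u w)"
      using gr pre by simp
    ultimately show ?thesis unfolding good_def by blast
  qed
  then show ?thesis using aR av by blast
qed



theorem mainTheorem14:
  fixes V :: "'v set" and E :: "'v edge set" and \<omega> :: "'v edge \<Rightarrow> nat"
    and R R' :: "'v edge multiset" and v :: 'v
  assumes "metric_instance V E \<omega> R"
    and "extraction_applicable R v"
    and "extraction_result E R v R'"
  shows "verts R' = verts R - {v} \<and>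
      (\<Sum>e\<in>#R'. \<omega> e) \<le> (\<Sum>e\<in>#R. \<omega> e) \<and> size R' \<le> size R \<and>
      (\<forall>u\<in>verts R'. balanced R' u \<longleftrightarrow> balanced R u) \<and>
      (\<forall>u\<in>verts R'. \<forall>w\<in>verts R'. reach R' u w \<longleftrightarrow> reach R u w) \<and>
      (\<forall>S. set_mset S \<subseteq> E \<longrightarrow> verts S \<subseteq> verts R' \<longrightarrow>
           (eulerian_extension E R' S \<longleftrightarrow> eulerian_extension E R S))"
proof -
  have RE: "set_mset R \<subseteq> E" and EV: "\<forall>e\<in>E. set_uprod e \<subseteq> V"
    and compl: "\<forall>u\<in>V. \<forall>w\<in>V. u \<noteq> w \<longrightarrow> Upair u w \<in> E"
    and tri: "\<forall>u\<in>V. \<forall>v\<in>V. \<forall>w\<in>V. Upair u w \<in> E \<longrightarrow> Upair u v \<in> E \<longrightarrow> Upair v w \<in> E \<longrightarrow>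
        \<omega> (Upair u w) \<le> \<omega> (Upair u v) + \<omega> (Upair v w)"
    using assms(1) unfolding metric_instance_def rpp_instance_def by blast+
  have bal: "balanced R v" and c3: "3 \<le> card {u\<in>verts R. reach R v u}"
    using assms(2) unfolding extraction_applicable_def by blast+
  have "good \<omega> R R' v \<and> (\<exists>p. p \<noteq> v \<and> Upair p v \<in># R)"
    using assms(3) unfolding extraction_result_def
  proof (elim disjE conjE exE)
    assume "\<not> cut_vertex (verts R) R v" "extract_a E R v R'"
    then show ?thesis using case_a[OF RE EV tri c3] by blast
  next
    fix A B a b
    assume h: "card {H. is_block R H \<and> v \<in> fst H} = 2" "is_block R A" "is_block R B" "A \<noteq> B"
      "v \<in> fst A" "v \<in> fst B" "a \<noteq> v" "Upair a v \<in># snd A" "b \<noteq> v" "Upair b v \<in># snd B"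
      "let R'' = R - {#Upair a v, Upair b v#} + {#Upair a b#}
       in v \<notin> verts R'' \<and> R' = R'' \<or> v \<in> verts R'' \<and> extract_a E R'' v R'"
    show ?thesis by (rule case_b[OF RE EV tri compl h])
  qed
  then show ?thesis using final_step[OF _ bal] by blast
qed


end
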